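(* Let $t>0$ and $k\ge 1$ be constants, and let $p_0,p_1,p_2,p_3$ be real numbers with $0<p_i<1$ and $\sum_{i=0}^{3}p_i=1$. Define $T(n,r)$ for real $n\ge 0$ and integers $r\ge 0$ by $$T(n,r)=\begin{cases}1 & \text{if } n\le t k^r,\\ 1+\sum_{i=0}^{3} T\big(p_i(n-tk^r),\,r+1\big) & \text{if } n> t k^r.\end{cases}$$ Then, as $N\to\infty$, $T(N,0)\in\Theta(N^s)$, where $s$ is a real number with $0< s\le \frac{\log 4}{\log 4k}$ (namely the solution of $\sum_{i=0}^{3}p_i^s=k^s$).
   Context: $T(N,0)$ is the asymptotic space (number of counters) used by a DN-tree with parameters $k$ and $t$ after recording $N$ extent accesses: a tree vertex at level $r$ saturates at threshold $tk^r$, after which further accesses are distributed among its four children with probabilities $p_0,\dots,p_3$. The parameters $t,k,p_i$ are fixed as $N\to\infty$. *)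

theory Defs
  imports Complex_Main "HOL-Library.Landau_Symbols"
begin

definition DN_rec :: "real \<Rightarrow> real \<Rightarrow> (nat \<Rightarrow> real) \<Rightarrow> (real \<Rightarrow> nat \<Rightarrow> real) \<Rightarrow> bool" where
  "DN_rec t k p T \<longleftrightarrow>
     (\<forall>n r. n \<ge> 0 \<longrightarrow>
        T n r = (if n \<le> t * k ^ r then 1
                 else 1 + (\<Sum>i<4. T (p i * (n - t * k ^ r)) (Suc r))))"

end

theory Submission
  imports Defs "HOL-Analysis.Analysis"
begin

lemma powr_subadd:
  fixes a b s :: real
  assumes "0 < s" "s \<le> 1" "0 \<le> a" "0 \<le> b"
  shows "(a + b) powr s \<le> a powr s + b powr s"
proof (cases "a + b = 0")
  case True then show ?thesis using assms by simp
next
  case False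
  hence ab: "a + b > 0" using assms by simp
  have u: "a/(a+b) \<le> (a/(a+b)) powr s" "b/(a+b) \<le> (b/(a+b)) powr s"
  proof -
    have h: "u \<le> u powr s" if "0 \<le> u" "u \<le> 1" for u :: real
    proof (cases "u = 0")
      case True then show ?thesis by simp
    next
      case False
      hence "u powr 1 \<le> u powr s" using that assms by (intro powr_mono') auto
      thus ?thesis using False that by simp
    qed
    show "a/(a+b) \<le> (a/(a+b)) powr s" using ab assms by (intro h) auto
    show "b/(a+b) \<le> (b/(a+b)) powr s" using ab assms by (intro h) auto
  qed
  have "1 = a/(a+b) + b/(a+b)" using ab by (simp flip: add_divide_distrib)
  also have "\<dots> \<le> (a powr s + b powr s) / (a+b) powr s"
    using u assms ab by (simp add: powr_divide add_divide_distrib)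
  finally show ?thesis using ab by (simp add: field_simps)
qed

lemma child_x:
  fixes t k n :: real
  assumes "t > 0" "k > 0"
  shows "p * (n - t * k ^ r) / (t * k ^ Suc r) = p / k * (n / (t * k ^ r) - 1)"
  using assms by (simp add: field_simps)

lemma T_lower:
  fixes t k s :: real and p :: "nat \<Rightarrow> real" and T :: "real \<Rightarrow> nat \<Rightarrow> real"
  assumes t: "t > 0" and k: "k \<ge> 1"
    and p: "\<forall>i<4. 0 < p i \<and> p i < 1"
    and rec: "DN_rec t k p T"
    and s: "0 < s" "s \<le> 1"
    and q: "(\<Sum>i<4. (p i / k) powr s) = 1"
  shows "n \<ge> 0 \<Longrightarrow> T n r \<ge> 4/5 * (n/(t*k^r)) powr s + 1/5"
proof -
  have k0: "k > 0" using k by simp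
  have main: "\<forall>n r. n \<ge> 0 \<longrightarrow> n/(t*k^r) \<le> real m \<longrightarrow> T n r \<ge> 4/5 * (n/(t*k^r)) powr s + 1/5" for m
  proof (induction m)
    case 0
    show ?case
    proof (intro allI impI)
      fix n r assume n: "n \<ge> 0" "n/(t*k^r) \<le> real 0"
      have tk: "t*k^r > 0" using t k0 by simp
      have "n = 0" using n tk by (simp add: divide_le_0_iff)
      hence "T n r = 1" using rec tk unfolding DN_rec_def by auto
      thus "T n r \<ge> 4/5 * (n/(t*k^r)) powr s + 1/5" using \<open>n = 0\<close> by simp
    qed
  next
    case (Suc m)
    show ?case
    proof (intro allI impI)
      fix n r assume n: "n \<ge> 0" "n/(t*k^r) \<le> real (Suc m)"
      have tk: "t*k^r > 0" using t k0 by simp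
      define x where "x = n/(t*k^r)"
      have x0: "x \<ge> 0" using n tk by (simp add: x_def)
      show "T n r \<ge> 4/5 * (n/(t*k^r)) powr s + 1/5"
      proof (cases "n \<le> t*k^r")
        case True
        hence "T n r = 1" using rec n unfolding DN_rec_def by auto
        moreover have "x \<le> 1" using True tk by (simp add: x_def)
        hence "x powr s \<le> 1" using x0 s by (intro powr_le1) auto
        ultimately show ?thesis by (simp add: x_def[symmetric])
      next
        case False
        hence Tn: "T n r = 1 + (\<Sum>i<4. T (p i * (n - t * k ^ r)) (Suc r))"
          using rec n unfolding DN_rec_def by auto
        have x1: "x > 1" using False tk by (simp add: x_def)
        have IH: "T (p i * (n - t * k ^ r)) (Suc r) \<ge> 4/5 * ((p i / k) powr s * (x - 1) powr s) + 1/5"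
          if i: "i < 4" for i
        proof -
          have pi: "0 < p i" "p i < 1" using p i by auto
          have cx: "p i * (n - t * k ^ r) / (t * k ^ Suc r) = p i / k * (x - 1)"
            using child_x[OF t k0] by (simp add: x_def)
          have "p i / k \<le> 1" using pi k by simp
          hence "p i / k * (x - 1) \<le> x - 1" using x1 mult_left_le_one_le[of "x-1" "p i / k"] pi k0 by simp
          moreover have "x \<le> real (Suc m)" using n by (simp add: x_def)
          ultimately have le: "p i * (n - t * k ^ r) / (t * k ^ Suc r) \<le> real m" using cx by simp
          have nn: "p i * (n - t * k ^ r) \<ge> 0" using pi False by simp
          have "T (p i * (n - t * k ^ r)) (Suc r) \<ge> 4/5 * (p i / k * (x - 1)) powr s + 1/5"
            using Suc.IH[rule_format, OF nn le] unfolding cx .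
          moreover have "(p i / k * (x - 1)) powr s = (p i / k) powr s * (x - 1) powr s"
            using pi k0 x1 by (subst powr_mult) auto
          ultimately show ?thesis by simp
        qed
        have "(\<Sum>i<4. T (p i * (n - t * k ^ r)) (Suc r)) \<ge> (\<Sum>i<4. 4/5 * ((p i / k) powr s * (x - 1) powr s) + 1/5)"
          using IH by (intro sum_mono) auto
        also have "(\<Sum>i<4. 4/5 * ((p i / k) powr s * (x - 1) powr s) + 1/5) = 4/5 * (x-1) powr s * (\<Sum>i<4. (p i / k) powr s) + 4/5"
          by (simp add: sum.distrib sum_distrib_left sum_distrib_right algebra_simps)
        finally have S: "(\<Sum>i<4. T (p i * (n - t * k ^ r)) (Suc r)) \<ge> 4/5 * (x-1) powr s + 4/5"
          using q by simp
        have "x powr s \<le> (x - 1) powr s + 1 powr s"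
          using powr_subadd[OF s, of "x-1" 1] x1 by simp
        thus ?thesis using S Tn by (simp add: x_def[symmetric])
      qed
    qed
  qed
  assume n: "n \<ge> 0"
  show ?thesis using main[of "nat \<lceil>n/(t*k^r)\<rceil>"] n by (meson real_nat_ceiling_ge)
qed

lemma T_upper:
  fixes t k s A :: real and p :: "nat \<Rightarrow> real" and T :: "real \<Rightarrow> nat \<Rightarrow> real"
  assumes t: "t > 0" and k: "k \<ge> 1"
    and p: "\<forall>i<4. 0 < p i \<and> p i < 1"
    and rec: "DN_rec t k p T"
    and s: "0 < s" "s \<le> 1"
    and q: "(\<Sum>i<4. (p i / k) powr s) = 1"
    and A: "A \<ge> 0" "\<forall>i<4. A * (p i / k) powr s \<ge> 6"
  shows "n \<ge> 0 \<Longrightarrow> n/(t*k^r) \<le> 1 \<or> T n r \<le> A * (n/(t*k^r)) powr s - 1"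
proof -
  have k0: "k > 0" using k by simp
  have main: "\<forall>n r. n \<ge> 0 \<longrightarrow> n/(t*k^r) \<le> real m \<longrightarrow> n/(t*k^r) \<le> 1 \<or> T n r \<le> A * (n/(t*k^r)) powr s - 1" for m
  proof (induction m)
    case 0
    show ?case
    proof (intro allI impI)
      fix n r assume n: "n \<ge> 0" "n/(t*k^r) \<le> real 0"
      thus "n/(t*k^r) \<le> 1 \<or> T n r \<le> A * (n/(t*k^r)) powr s - 1" by simp
    qed
  next
    case (Suc m)
    show ?case
    proof (intro allI impI)
      fix n r assume n: "n \<ge> 0" "n/(t*k^r) \<le> real (Suc m)"
      have tk: "t*k^r > 0" using t k0 by simp
      define x where "x = n/(t*k^r)"
      show "n/(t*k^r) \<le> 1 \<or> T n r \<le> A * (n/(t*k^r)) powr s - 1"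
      proof (cases "n \<le> t*k^r")
        case True
        thus ?thesis using tk by simp
      next
        case False
        hence Tn: "T n r = 1 + (\<Sum>i<4. T (p i * (n - t * k ^ r)) (Suc r))"
          using rec n unfolding DN_rec_def by auto
        have x1: "x > 1" using False tk by (simp add: x_def)
        define b where "b i = T (p i * (n - t * k ^ r)) (Suc r)" for i
        define c where "c i = A * ((p i / k) powr s * (x - 1) powr s)" for i
        define W where "W = A * x powr s"
        have IH: "b i = 1 \<or> b i \<le> c i - 1" if i: "i < 4" for i
        proof -
          have pi: "0 < p i" "p i < 1" using p i by auto
          have cx: "p i * (n - t * k ^ r) / (t * k ^ Suc r) = p i / k * (x - 1)"
            using child_x[OF t k0] by (simp add: x_def)
          have "p i / k \<le> 1" using pi k by simp
          hence "p i / k * (x - 1) \<le> x - 1" using x1 mult_left_le_one_le[of "x-1" "p i / k"] pi k0 by simp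
          moreover have "x \<le> real (Suc m)" using n by (simp add: x_def)
          ultimately have le: "p i * (n - t * k ^ r) / (t * k ^ Suc r) \<le> real m" using cx by simp
          have nn: "p i * (n - t * k ^ r) \<ge> 0" using pi False by simp
          have tk1: "t * k ^ Suc r > 0" using t k0 by simp
          have "(p i / k * (x - 1)) powr s = (p i / k) powr s * (x - 1) powr s"
            using pi k0 x1 by (subst powr_mult) auto
          moreover have "p i / k * (x - 1) \<le> 1 \<or> T (p i * (n - t * k ^ r)) (Suc r) \<le> A * (p i / k * (x - 1)) powr s - 1"
            using Suc.IH[rule_format, OF nn le] unfolding cx .
          moreover have "p i / k * (x - 1) \<le> 1 \<Longrightarrow> b i = 1"
          proof -
            assume "p i / k * (x - 1) \<le> 1"
            hence "p i * (n - t * k ^ r) / (t * k ^ Suc r) \<le> 1" using cx by simp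
            hence "p i * (n - t * k ^ r) \<le> t * k ^ Suc r" using tk1 by (simp add: pos_divide_le_eq)
            thus "b i = 1" using rec nn unfolding DN_rec_def b_def by auto
          qed
          ultimately show ?thesis unfolding c_def b_def by auto
        qed
        have c0: "c i \<ge> 0" for i unfolding c_def using A by simp
        have xs1: "x powr s \<ge> 1" using x1 s by (simp add: ge_one_powr_ge_zero)
        have xm: "(x - 1) powr s \<le> x powr s" using x1 s by (intro powr_mono2) auto
        have Sc: "(\<Sum>i<4. c i) = A * (x-1) powr s"
          unfolding c_def using q by (simp add: sum_distrib_left[symmetric] sum_distrib_right[symmetric])
        have key: "W - (\<Sum>i<4. c i) + c j \<ge> 6" if j: "j < 4" for j
        proof -
          have pj: "0 < p j" "p j < 1" using p j by auto
          have qj: "(p j / k) powr s \<le> 1" using pj k0 k s by (intro powr_le1) auto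
          have "W - (\<Sum>i<4. c i) + c j - A * x powr s * (p j / k) powr s
              = A * (x powr s - (x-1) powr s) * (1 - (p j / k) powr s)"
            by (simp only: Sc) (simp add: W_def c_def algebra_simps)
          also have "\<dots> \<ge> 0" using A xm qj by simp
          finally have "W - (\<Sum>i<4. c i) + c j \<ge> A * x powr s * (p j / k) powr s" by simp
          moreover have "A * x powr s * (p j / k) powr s \<ge> A * (p j / k) powr s"
            using mult_left_mono[OF xs1, of "A * (p j / k) powr s"] A(1) by (simp add: algebra_simps)
          ultimately show ?thesis using A j by force
        qed
        have SW: "(\<Sum>i<4. c i) \<le> W" unfolding Sc W_def using A xm by (simp add: mult_left_mono)
        have e4: "(\<Sum>i<4. f i) = f 0 + f 1 + f 2 + f 3" for f :: "nat \<Rightarrow> real"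
          by (simp add: eval_nat_numeral)
        have "T n r \<le> W - 1"
          using Tn[folded b_def] SW[unfolded e4] key[of 0, unfolded e4] key[of 1, unfolded e4]
            key[of 2, unfolded e4] key[of 3, unfolded e4] c0[of 0] c0[of 1] c0[of 2] c0[of 3]
            IH[of 0] IH[of 1] IH[of 2] IH[of 3]
          unfolding e4 by auto
        thus ?thesis by (simp add: W_def x_def)
      qed
    qed
  qed
  assume n: "n \<ge> 0"
  show ?thesis using main[of "nat \<lceil>n/(t*k^r)\<rceil>"] n by (meson real_nat_ceiling_ge)
qed

theorem theorem2:
  fixes t k :: real and p :: "nat \<Rightarrow> real" and T :: "real \<Rightarrow> nat \<Rightarrow> real"
  assumes "t > 0" and "k \<ge> 1"
    and "\<forall>i<4. 0 < p i \<and> p i < 1"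
    and "(\<Sum>i<4. p i) = 1"
    and "DN_rec t k p T"
  shows "\<exists>s::real. 0 < s \<and> s \<le> ln 4 / ln (4 * k) \<and>
           (\<Sum>i<4. p i powr s) = k powr s \<and>
           (\<lambda>N. T N 0) \<in> \<Theta>[at_top](\<lambda>N. N powr s)"
proof -
  note t = assms(1) and k = assms(2) and p = assms(3) and ps = assms(4) and rec = assms(5)
  have k0: "k > 0" using k by simp
  define f where "f s = (\<Sum>i<4. p i powr s) - k powr s" for s :: real
  have cont: "continuous_on {0..1} f"
    unfolding f_def using p k0 by (intro continuous_intros) auto
  have "(\<Sum>i<4. p i powr (0::real)) = (\<Sum>i<(4::nat). 1)" using p by (intro sum.cong) auto
  hence f0: "f 0 = 3" unfolding f_def using k0 by simp
  have "(\<Sum>i<4. p i powr (1::real)) = (\<Sum>i<4. p i)" using p by (intro sum.cong) auto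
  hence f1: "f 1 \<le> 0" unfolding f_def using k0 ps k by simp
  obtain s where s01: "0 \<le> s" "s \<le> 1" and fs: "f s = 0"
    using IVT2'[of f 1 0 0, OF f1 _ _ cont] f0 by auto
  have s0: "s > 0" using fs f0 s01 by (cases "s = 0") auto
  have eq: "(\<Sum>i<4. p i powr s) = k powr s" using fs unfolding f_def by simp
  have q: "(\<Sum>i<4. (p i / k) powr s) = 1"
  proof -
    have "(\<Sum>i<4. (p i / k) powr s) = (\<Sum>i<4. p i powr s) / k powr s"
      using p k0 by (simp add: powr_divide sum_divide_distrib)
    thus ?thesis using eq k0 by simp
  qed
  have young: "(4 * p i) powr s \<le> s * (4 * p i) + (1 - s)" if i: "i < 4" for i
    using Youngs_inequality_0[of s "1 - s" "4 * p i" 1] s01 p i by auto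
  have "(\<Sum>i<4. (4 * p i) powr s) \<le> (\<Sum>i<4. s * (4 * p i) + (1 - s))"
    using young by (intro sum_mono) auto
  also have "\<dots> = 4 * s * (\<Sum>i<4. p i) + 4 * (1 - s)"
    by (simp add: sum.distrib sum_distrib_left mult_ac)
  finally have "(\<Sum>i<4. (4 * p i) powr s) \<le> 4" using ps by simp
  moreover have "(\<Sum>i<4. (4 * p i) powr s) = 4 powr s * k powr s"
    using p eq by (simp add: powr_mult sum_distrib_left[symmetric])
  ultimately have "(4 * k) powr s \<le> 4" using k0 by (simp add: powr_mult)
  hence "ln ((4 * k) powr s) \<le> ln 4" using k0 by (subst ln_le_cancel_iff) auto
  hence "s * ln (4 * k) \<le> ln 4" using k0 by (simp add: ln_powr)
  moreover have "ln (4 * k) > 0" using k by simp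
  ultimately have sb: "s \<le> ln 4 / ln (4 * k)" by (simp add: pos_le_divide_eq)
  define A where "A = 6 * (\<Sum>i<4. (k / p i) powr s)"
  have A0: "A > 0" unfolding A_def using p k0
    by (intro mult_pos_pos sum_pos) (auto simp: lessThan_empty_iff)
  have A6: "\<forall>i<4. A * (p i / k) powr s \<ge> 6"
  proof (intro allI impI)
    fix i :: nat assume i: "i < 4"
    have pi: "p i > 0" using p i by auto
    have "(k / p i) powr s \<le> (\<Sum>i<4. (k / p i) powr s)"
      using i by (intro member_le_sum) auto
    hence "6 * ((k / p i) powr s * (p i / k) powr s) \<le> A * (p i / k) powr s"
      unfolding A_def by (simp add: mult_right_mono)
    moreover have "(k / p i) powr s * (p i / k) powr s = 1"
      using pi k0 by (simp add: powr_mult[symmetric])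
    ultimately show "A * (p i / k) powr s \<ge> 6" by simp
  qed
  have low: "T N 0 \<ge> 4/5 * (N/t) powr s + 1/5" if "N \<ge> 0" for N
    using T_lower[OF t k p rec s0 s01(2) q that, of 0] by simp
  have up: "N/t \<le> 1 \<or> T N 0 \<le> A * (N/t) powr s - 1" if "N \<ge> 0" for N
    using T_upper[OF t k p rec s0 s01(2) q A0[THEN less_imp_le] A6 that, of 0] by simp
  have "(\<lambda>N. T N 0) \<in> \<Theta>[at_top](\<lambda>N. N powr s)"
  proof (rule bigthetaI'[of "4/5 / t powr s" "A / t powr s"])
    show "4/5 / t powr s > 0" using t by simp
    show "A / t powr s > 0" using t A0 by simp
    show "eventually (\<lambda>N. 4/5 / t powr s * norm (N powr s) \<le> norm (T N 0) \<and>
            norm (T N 0) \<le> A / t powr s * norm (N powr s)) at_top"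
      using eventually_gt_at_top[of t]
    proof eventually_elim
      case (elim N)
      have N0: "N > 0" using elim t by simp
      have Nt: "N / t > 1" using elim t by simp
      have d: "(N/t) powr s = N powr s / t powr s" using N0 t by (simp add: powr_divide)
      have L: "T N 0 \<ge> 4/5 * (N/t) powr s + 1/5" using low N0 by simp
      have U: "T N 0 \<le> A * (N/t) powr s - 1" using up[of N] N0 Nt by simp
      have Tp: "T N 0 > 0" using L powr_ge_zero[of "N/t" s] by linarith
      show ?case using L U Tp d N0 by auto
    qed
  qed
  thus ?thesis using s0 sb eq by blast
qed

end
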